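(* Let $f:\mathbb{R}^d\to\mathbb{R}$ be twice continuously differentiable with $\nabla f$ Lipschitz continuous with constant $\kappa_{Lg}>0$. Fix $\bm{x}_0\in\mathbb{R}^d$, $\Delta>0$, the coordinate design set $\bm{x}^0=\bm{x}_0$, $\bm{x}^i=\bm{x}_0+\Delta\bm{e}^i$, $\bm{x}^{i+d}=\bm{x}_0-\Delta\bm{e}^i$ ($i=1,\dots,d$), arbitrary reals $\bar E^0,\dots,\bar E^{2d}$, and $\bar F^i=f(\bm{x}^i)+\bar E^i$. Let $M(\bm{x}_0+\bm{s})=\beta_0+\bm{s}^\top\bm{G}+\frac12\bm{s}^\top\mathsf{H}\bm{s}$ with $\mathsf{H}$ diagonal be the quadratic model with diagonal Hessian interpolating $M(\bm{x}^i)=\bar F^i$, $i=0,\dots,2d$, and suppose $\|\mathsf{H}\|\le\kappa_{\mathsf{H}}$. Then for every $\bm{x}\in\mathcal{B}(\bm{x}_0;\Delta)$, $$|M(\bm{x})-f(\bm{x})|\le\kappa_{ef}\Delta^2+|\bar E^0|+\sum_{i=1}^{2d}|\bar E^i-\bar E^0|,$$ where $\kappa_{ef}=\kappa_{eg1}+\frac{\kappa_{Lg}+\kappa_{\mathsf{H}}}{2}$ and $\kappa_{eg1}=\frac{5\sqrt{2d}}{2}(\kappa_{Lg}+\kappa_{\mathsf{H}})$.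
   Context: $\bm{e}^i$ is the $i$-th standard unit basis vector; $\mathcal{B}(\bm{x}_0;\Delta)$ is the closed Euclidean ball of radius $\Delta$ centered at $\bm{x}_0$; $\|\mathsf{H}\|$ is the spectral norm. *)

theory Defs
  imports "HOL-Analysis.Analysis"
begin

definition quad_model :: "real^'n \<Rightarrow> real \<Rightarrow> real^'n \<Rightarrow> real^'n^'n \<Rightarrow> real^'n \<Rightarrow> real" where
  "quad_model x0 beta0 G H x = beta0 + (x - x0) \<bullet> G + (1/2) * ((x - x0) \<bullet> (H *v (x - x0)))"

definition diagonal_mat :: "real^'n^'n \<Rightarrow> bool" where
  "diagonal_mat H \<longleftrightarrow> (\<forall>i j. i \<noteq> j \<longrightarrow> H $ i $ j = 0)"

end

theory Submission imports Defs begin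
lemma taylor_lip:
  fixes f :: "'a::real_inner \<Rightarrow> real"
  assumes grad: "\<And>x. (f has_derivative (\<lambda>h. g x \<bullet> h)) (at x)"
    and lip: "\<And>x y. norm (g x - g y) \<le> L * norm (x - y)"
  shows "\<bar>f (x + h) - f x - g x \<bullet> h\<bar> \<le> L/2 * (norm h)^2"
proof -
  have d: "((\<lambda>t. f (x + t *\<^sub>R h)) has_real_derivative (g (x + t *\<^sub>R h) \<bullet> h)) (at t)" for t
  proof -
    have "((\<lambda>t. x + t *\<^sub>R h) has_derivative (\<lambda>u. u *\<^sub>R h)) (at t)"
      by (auto intro!: derivative_eq_intros)
    from has_derivative_compose[OF this grad]
    have "((\<lambda>t. f (x + t *\<^sub>R h)) has_derivative (\<lambda>u. g (x + t *\<^sub>R h) \<bullet> (u *\<^sub>R h))) (at t)"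
      by (simp add: o_def)
    moreover have "(\<lambda>u. u * (g (x + t *\<^sub>R h) \<bullet> h)) = (*) (g (x + t *\<^sub>R h) \<bullet> h)"
      by (auto simp: mult.commute)
    ultimately show ?thesis unfolding has_field_derivative_def by simp
  qed
  have b: "\<bar>(g (x + t *\<^sub>R h) - g x) \<bullet> h\<bar> \<le> L * t * (norm h)^2" if "0 \<le> t" for t
  proof -
    have "\<bar>(g (x + t *\<^sub>R h) - g x) \<bullet> h\<bar> \<le> norm (g (x + t *\<^sub>R h) - g x) * norm h"
      by (rule Cauchy_Schwarz_ineq2)
    also have "\<dots> \<le> L * norm (t *\<^sub>R h) * norm h"
      using lip[of "x + t *\<^sub>R h" x] by (simp add: mult_right_mono)
    finally show ?thesis using that by (simp add: power2_eq_square mult.assoc)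
  qed
  define p where "p t = f (x + t *\<^sub>R h) - t * (g x \<bullet> h) + L/2 * t^2 * (norm h)^2" for t
  define m where "m t = - f (x + t *\<^sub>R h) + t * (g x \<bullet> h) + L/2 * t^2 * (norm h)^2" for t
  have "p 0 \<le> p 1"
  proof (rule DERIV_nonneg_imp_nondecreasing[of 0 1 p])
    fix t :: real assume t: "0 \<le> t" "t \<le> 1"
    show "\<exists>y. (p has_real_derivative y) (at t) \<and> 0 \<le> y"
      apply (rule exI[of _ "g (x + t *\<^sub>R h) \<bullet> h - g x \<bullet> h + L * t * (norm h)^2"])
      apply (intro conjI)
      unfolding p_def
       apply (rule derivative_eq_intros d | simp)+
      using b[of t] t by (auto simp: inner_diff_left)
  qed simp
  moreover have "m 0 \<le> m 1"
  proof (rule DERIV_nonneg_imp_nondecreasing[of 0 1 m])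
    fix t :: real assume t: "0 \<le> t" "t \<le> 1"
    show "\<exists>y. (m has_real_derivative y) (at t) \<and> 0 \<le> y"
      apply (rule exI[of _ "- (g (x + t *\<^sub>R h) \<bullet> h) + g x \<bullet> h + L * t * (norm h)^2"])
      apply (intro conjI)
      unfolding m_def
       apply (rule derivative_eq_intros d | simp)+
      using b[of t] t by (auto simp: inner_diff_left)
  qed simp
  ultimately show ?thesis unfolding p_def m_def abs_le_iff by simp
qed

lemma qm_axis:
  fixes H :: "real^'n^'n"
  shows "quad_model x0 beta0 G H (x0 + c *\<^sub>R axis i 1) = beta0 + c * G$i + 1/2 * c^2 * H$i$i"
  unfolding quad_model_def
  by (simp add: matrix_vector_mult_basis column_def inner_axis' matrix_vector_mult_scaleR power2_eq_square)

lemma qm_x0: "quad_model x0 beta0 G H x0 = beta0"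
  unfolding quad_model_def by simp

lemma sum_sqrt_bound:
  fixes A :: "real^'n"
  assumes "\<And>i. \<bar>A$i\<bar> \<le> c"
  shows "norm A \<le> sqrt (real CARD('n)) * c"
proof -
  have c0: "0 \<le> c" using assms[of undefined] by linarith
  have "(\<Sum>i\<in>UNIV. (norm (A$i))^2) \<le> (\<Sum>i\<in>(UNIV::'n set). c^2)"
    apply (rule sum_mono)
    subgoal for i using power_mono[OF assms[of i] abs_ge_zero, of 2] by simp
    done
  hence "norm A \<le> sqrt (\<Sum>i\<in>(UNIV::'n set). c^2)"
    unfolding norm_vec_def L2_set_def by (rule real_sqrt_le_mono)
  also have "\<dots> = sqrt (real CARD('n)) * c"
    using c0 by (simp add: real_sqrt_mult)
  finally show ?thesis .
qed

theorem mainTheorem3: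
  fixes f :: "real^'n \<Rightarrow> real"
    and g :: "real^'n \<Rightarrow> real^'n"
    and Hf :: "real^'n \<Rightarrow> real^'n^'n"
    and x0 G :: "real^'n" and H :: "real^'n^'n"
    and \<kappa>Lg \<kappa>H \<Delta> beta0 E0 :: real
    and Eplus Eminus :: "'n \<Rightarrow> real"
  assumes grad: "\<And>x. (f has_derivative (\<lambda>h. g x \<bullet> h)) (at x)"
    and hess: "\<And>x. (g has_derivative (\<lambda>h. Hf x *v h)) (at x)"
    and hess_cont: "continuous_on UNIV Hf"
    and lip: "\<And>x y. norm (g x - g y) \<le> \<kappa>Lg * norm (x - y)"
    and kLg: "\<kappa>Lg > 0"
    and Delta: "\<Delta> > 0"
    and diag: "diagonal_mat H"
    and interp0: "quad_model x0 beta0 G H x0 = f x0 + E0"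
    and interp_plus: "\<And>i. quad_model x0 beta0 G H (x0 + \<Delta> *\<^sub>R axis i 1)
                         = f (x0 + \<Delta> *\<^sub>R axis i 1) + Eplus i"
    and interp_minus: "\<And>i. quad_model x0 beta0 G H (x0 - \<Delta> *\<^sub>R axis i 1)
                         = f (x0 - \<Delta> *\<^sub>R axis i 1) + Eminus i"
    and Hbound: "onorm (\<lambda>v. H *v v) \<le> \<kappa>H"
  shows "\<forall>x \<in> cball x0 \<Delta>.
     \<bar>quad_model x0 beta0 G H x - f x\<bar>
       \<le> ((5 * sqrt (2 * real CARD('n)) / 2) * (\<kappa>Lg + \<kappa>H) + (\<kappa>Lg + \<kappa>H) / 2) * \<Delta>\<^sup>2
          + \<bar>E0\<bar> + (\<Sum>i\<in>UNIV. \<bar>Eplus i - E0\<bar> + \<bar>Eminus i - E0\<bar>)"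
proof
  fix x assume x: "x \<in> cball x0 \<Delta>"
  define L where "L = \<kappa>Lg"
  define d where "d = real CARD('n)"
  define s where "s = x - x0"
  have ns: "norm s \<le> \<Delta>" using x by (simp add: s_def dist_norm norm_minus_commute)
  have xs: "x = x0 + s" by (simp add: s_def)
  have blH: "bounded_linear (\<lambda>v. H *v v)"
    by (simp add: bounded_linearI' matrix_vector_right_distrib matrix_vector_mult_scaleR)
  have kH0: "0 \<le> \<kappa>H" using onorm_pos_le[OF blH] Hbound by linarith
  have b0: "beta0 = f x0 + E0" using interp0 by (simp add: qm_x0)
  define rp where "rp i = f (x0 + \<Delta> *\<^sub>R axis i 1) - f x0 - g x0 \<bullet> (\<Delta> *\<^sub>R axis i 1)" for i
  define rm where "rm i = f (x0 + (-\<Delta>) *\<^sub>R axis i 1) - f x0 - g x0 \<bullet> ((-\<Delta>) *\<^sub>R axis i 1)" for i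
  have rp: "\<bar>rp i\<bar> \<le> L/2 * \<Delta>^2" for i
    using taylor_lip[OF grad lip, of x0 "\<Delta> *\<^sub>R axis i 1"] Delta
    unfolding rp_def L_def by (simp add: norm_axis_1)
  have rm: "\<bar>rm i\<bar> \<le> L/2 * \<Delta>^2" for i
    using taylor_lip[OF grad lip, of x0 "(-\<Delta>) *\<^sub>R axis i 1"] Delta
    unfolding rm_def L_def by (simp add: norm_axis_1)
  have Gi: "2 * \<Delta> * (G$i - g x0 $ i) = rp i - rm i + Eplus i - Eminus i" for i
  proof -
    have p: "beta0 + \<Delta> * G$i + 1/2 * \<Delta>^2 * H$i$i = f x0 + \<Delta> * g x0 $ i + rp i + Eplus i"
      using interp_plus[of i] unfolding qm_axis rp_def by (simp add: inner_axis)
    have m: "beta0 + (-\<Delta>) * G$i + 1/2 * (-\<Delta>)^2 * H$i$i = f x0 - \<Delta> * g x0 $ i + rm i + Eminus i"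
      using interp_minus[of i] qm_axis[of x0 beta0 G H "-\<Delta>" i] unfolding rm_def
      by (simp add: inner_axis)
    from p m show ?thesis by (simp add: algebra_simps)
  qed
  define A where "A = (\<chi> i. (rp i - rm i) / (2 * \<Delta>))"
  define b where "b i = (Eplus i - Eminus i) / (2 * \<Delta>)" for i
  have Gg: "G$i - g x0 $ i = A$i + b i" for i
  proof -
    have "G$i - g x0$i = (2*\<Delta>*(G$i - g x0$i))/(2*\<Delta>)" using Delta by simp
    also have "\<dots> = (rp i - rm i + Eplus i - Eminus i)/(2*\<Delta>)" by (simp only: Gi)
    also have "\<dots> = A$i + b i" unfolding A_def b_def using Delta by (simp add: field_simps)
    finally show ?thesis .
  qed
  have Ai: "\<bar>A$i\<bar> \<le> L/2 * \<Delta>" for i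
  proof -
    have "\<bar>rp i - rm i\<bar> \<le> L * \<Delta>^2" using rp[of i] rm[of i] by linarith
    hence "\<bar>rp i - rm i\<bar> / (2*\<Delta>) \<le> L * \<Delta>^2 / (2*\<Delta>)"
      using Delta by (simp add: divide_right_mono)
    thus ?thesis using Delta unfolding A_def by (simp add: abs_divide power2_eq_square)
  qed
  have nA: "norm A \<le> sqrt d * (L/2 * \<Delta>)"
    unfolding d_def by (rule sum_sqrt_bound[OF Ai])
  have sG: "s \<bullet> (G - g x0) = s \<bullet> A + (\<Sum>i\<in>UNIV. s$i * b i)"
    by (simp add: inner_vec_def Gg distrib_left sum.distrib)
  have t1: "\<bar>s \<bullet> A\<bar> \<le> sqrt d * L / 2 * \<Delta>^2"
  proof -
    have "\<bar>s \<bullet> A\<bar> \<le> norm s * norm A" by (rule Cauchy_Schwarz_ineq2)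
    also have "\<dots> \<le> \<Delta> * (sqrt d * (L/2 * \<Delta>))"
      using mult_mono[OF ns nA] Delta by simp
    finally show ?thesis by (simp add: power2_eq_square mult_ac)
  qed
  have t2: "\<bar>\<Sum>i\<in>UNIV. s$i * b i\<bar> \<le> (\<Sum>i\<in>UNIV. \<bar>Eplus i - E0\<bar> + \<bar>Eminus i - E0\<bar>)"
  proof -
    have "\<bar>\<Sum>i\<in>UNIV. s$i * b i\<bar> \<le> (\<Sum>i\<in>UNIV. \<bar>s$i * b i\<bar>)" by (rule sum_abs)
    also have "\<dots> \<le> (\<Sum>i\<in>UNIV. \<bar>Eplus i - E0\<bar> + \<bar>Eminus i - E0\<bar>)"
    proof (rule sum_mono)
      fix i
      have "\<bar>s$i\<bar> \<le> \<Delta>" using component_le_norm_cart[of s i] ns by linarith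
      hence "\<bar>s$i * b i\<bar> \<le> \<Delta> * \<bar>b i\<bar>" by (simp add: abs_mult mult_right_mono)
      also have "\<dots> = \<bar>Eplus i - Eminus i\<bar> / 2" using Delta unfolding b_def by (simp add: abs_divide)
      also have "\<dots> \<le> \<bar>Eplus i - E0\<bar> + \<bar>Eminus i - E0\<bar>" by (simp add: abs_if)
      finally show "\<bar>s$i * b i\<bar> \<le> \<bar>Eplus i - E0\<bar> + \<bar>Eminus i - E0\<bar>" .
    qed
    finally show ?thesis .
  qed
  have t3: "\<bar>s \<bullet> (H *v s)\<bar> \<le> \<kappa>H * \<Delta>^2"
  proof -
    have "\<bar>s \<bullet> (H *v s)\<bar> \<le> norm s * norm (H *v s)" by (rule Cauchy_Schwarz_ineq2)
    also have "\<dots> \<le> norm s * (\<kappa>H * norm s)"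
      using onorm[OF blH, of s] Hbound by (simp add: mult_left_mono order_trans mult_right_mono)
    also have "\<dots> \<le> \<Delta> * (\<kappa>H * \<Delta>)" using mult_mono[OF ns mult_left_mono[OF ns kH0]] kH0 Delta by simp
    finally show ?thesis by (simp add: power2_eq_square mult_ac)
  qed
  have t4: "\<bar>f (x0 + s) - f x0 - g x0 \<bullet> s\<bar> \<le> L/2 * \<Delta>^2"
  proof -
    have "\<bar>f (x0 + s) - f x0 - g x0 \<bullet> s\<bar> \<le> L/2 * (norm s)^2"
      using taylor_lip[OF grad lip, of x0 s] unfolding L_def .
    also have "\<dots> \<le> L/2 * \<Delta>^2" using ns kLg unfolding L_def
      by (simp add: power_mono)
    finally show ?thesis .
  qed
  have eq: "quad_model x0 beta0 G H x - f x
     = E0 + s \<bullet> A + (\<Sum>i\<in>UNIV. s$i * b i) + 1/2 * (s \<bullet> (H *v s)) - (f (x0 + s) - f x0 - g x0 \<bullet> s)"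
    using sG unfolding quad_model_def xs b0 by (simp add: inner_diff_right inner_commute[of s "g x0"])
  have c1: "sqrt d * L / 2 \<le> 5 * sqrt (2 * d) / 2 * (L + \<kappa>H)"
  proof -
    have "sqrt d \<le> sqrt (2 * d)" by (rule real_sqrt_le_mono) (simp add: d_def)
    moreover have "0 \<le> sqrt (2 * d)" by (simp add: d_def)
    ultimately have sd: "sqrt d \<le> 5 * sqrt (2 * d)" by linarith
    have lL: "L \<le> L + \<kappa>H" using kH0 by simp
    have "sqrt d * L \<le> 5 * sqrt (2 * d) * (L + \<kappa>H)"
      apply (rule mult_mono[OF sd lL])
      using kLg L_def by (auto simp: d_def)
    thus ?thesis by simp
  qed
  have c2: "sqrt d * L / 2 * \<Delta>^2 \<le> 5 * sqrt (2 * d) / 2 * (L + \<kappa>H) * \<Delta>^2"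
    using c1 by (simp add: mult_right_mono)
  have "\<bar>quad_model x0 beta0 G H x - f x\<bar> \<le> \<bar>E0\<bar> + \<bar>s \<bullet> A\<bar> + \<bar>\<Sum>i\<in>UNIV. s$i * b i\<bar>
       + 1/2 * \<bar>s \<bullet> (H *v s)\<bar> + \<bar>f (x0 + s) - f x0 - g x0 \<bullet> s\<bar>"
    unfolding eq by linarith
  also have "\<dots> \<le> \<bar>E0\<bar> + sqrt d * L / 2 * \<Delta>^2 + (\<Sum>i\<in>UNIV. \<bar>Eplus i - E0\<bar> + \<bar>Eminus i - E0\<bar>)
       + 1/2 * (\<kappa>H * \<Delta>^2) + L/2 * \<Delta>^2"
    using t1 t2 t3 t4 by linarith
  also have "\<dots> \<le> ((5 * sqrt (2 * d) / 2) * (L + \<kappa>H) + (L + \<kappa>H) / 2) * \<Delta>\<^sup>2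
          + \<bar>E0\<bar> + (\<Sum>i\<in>UNIV. \<bar>Eplus i - E0\<bar> + \<bar>Eminus i - E0\<bar>)"
  proof -
    have "((5 * sqrt (2 * d) / 2) * (L + \<kappa>H) + (L + \<kappa>H) / 2) * \<Delta>\<^sup>2
       = 5 * sqrt (2 * d) / 2 * (L + \<kappa>H) * \<Delta>^2 + 1/2 * (\<kappa>H * \<Delta>^2) + L/2 * \<Delta>^2"
      by (simp add: algebra_simps)
    thus ?thesis using c2 by linarith
  qed
  finally show "\<bar>quad_model x0 beta0 G H x - f x\<bar>
       \<le> ((5 * sqrt (2 * real CARD('n)) / 2) * (\<kappa>Lg + \<kappa>H) + (\<kappa>Lg + \<kappa>H) / 2) * \<Delta>\<^sup>2
          + \<bar>E0\<bar> + (\<Sum>i\<in>UNIV. \<bar>Eplus i - E0\<bar> + \<bar>Eminus i - E0\<bar>)"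
    unfolding d_def L_def .
qed
end
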